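(* Let $p\in\mathbb{N}$, let $f\in A_p$, and let $g\in R_f(G)$. Then $g$ has finite even order $2s$ for some $s\in\mathbb{N}$ such that $p/s$ is an odd integer.
   Context: $G$ denotes the group (under composition) of biholomorphic germs at $0$ in one complex variable: germs of functions $f$ holomorphic near $0$ with $f(0)=0$ and $f'(0)\neq 0$. The multiplier of $f$ is $m(f)=f'(0)$. $G_1=\{f\in G: f'(0)=1\}$, and for $p\in\mathbb{N}$, $G_p=\{f\in G_1: f^{(k)}(0)=0 \text{ for } 2\le k\le p\}$ and $A_p=G_p\setminus G_{p+1}$ (so $f\in A_p$ means $f(z)=z+f_{p+1}z^{p+1}+O(z^{p+2})$ with $f_{p+1}\ne 0$). For $f\in G$, $R_f(G)$ is the set of $g\in G$ with $g^{-1}\circ f\circ g=f^{-1}$. *)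

theory Defs
  imports "HOL-Complex_Analysis.Complex_Analysis"
begin

text \<open>Germs at 0 are represented by functions; two functions define the same germ
  iff they agree on a neighbourhood of 0.\<close>
definition germ_eq :: "(complex \<Rightarrow> complex) \<Rightarrow> (complex \<Rightarrow> complex) \<Rightarrow> bool" where
  "germ_eq f g \<longleftrightarrow> (\<forall>\<^sub>F z in nhds 0. f z = g z)"

definition in_G :: "(complex \<Rightarrow> complex) \<Rightarrow> bool" where
  "in_G f \<longleftrightarrow> (\<exists>r>0. f holomorphic_on ball 0 r) \<and> f 0 = 0 \<and> deriv f 0 \<noteq> 0"

definition in_Gp :: "nat \<Rightarrow> (complex \<Rightarrow> complex) \<Rightarrow> bool" where
  "in_Gp p f \<longleftrightarrow> in_G f \<and> deriv f 0 = 1 \<and> (\<forall>k. 2 \<le> k \<and> k \<le> p \<longrightarrow> (deriv ^^ k) f 0 = 0)"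

definition in_Ap :: "nat \<Rightarrow> (complex \<Rightarrow> complex) \<Rightarrow> bool" where
  "in_Ap p f \<longleftrightarrow> in_Gp p f \<and> \<not> in_Gp (Suc p) f"

definition germ_inv :: "(complex \<Rightarrow> complex) \<Rightarrow> (complex \<Rightarrow> complex) \<Rightarrow> bool" where
  "germ_inv f h \<longleftrightarrow> in_G h \<and> germ_eq (h \<circ> f) id \<and> germ_eq (f \<circ> h) id"

definition in_R :: "(complex \<Rightarrow> complex) \<Rightarrow> (complex \<Rightarrow> complex) \<Rightarrow> bool" where
  "in_R f g \<longleftrightarrow> in_G g \<and> (\<exists>ginv finv. germ_inv g ginv \<and> germ_inv f finv \<and>
      germ_eq (ginv \<circ> f \<circ> g) finv)"

definition germ_order :: "(complex \<Rightarrow> complex) \<Rightarrow> nat \<Rightarrow> bool" where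
  "germ_order g n \<longleftrightarrow> 1 \<le> n \<and> germ_eq (g ^^ n) id \<and>
      (\<forall>m. 1 \<le> m \<and> m < n \<longrightarrow> \<not> germ_eq (g ^^ m) id)"

end

theory Submission imports Defs begin

lemma hol_isCont:
  assumes "g holomorphic_on ball 0 r" "r > 0" "norm x < r"
  shows "isCont g x"
  using assms by (metis centre_in_ball continuous_on_interior holomorphic_on_imp_continuous_on
      interior_ball mem_ball_0 continuous_at_imp_continuous_on)

lemma strong_diff:
  fixes g :: "complex \<Rightarrow> complex"
  assumes hol: "g holomorphic_on ball 0 r" and r: "r > 0" and e: "\<epsilon> > 0"
  shows "\<exists>\<delta>>0. \<delta> \<le> r \<and> (\<forall>x y. x \<in> ball 0 \<delta> \<longrightarrow> y \<in> ball 0 \<delta> \<longrightarrow>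
           norm (g x - g y - deriv g 0 * (x - y)) \<le> \<epsilon> * norm (x - y))"
proof -
  have "deriv g holomorphic_on ball 0 r" using hol by (simp add: holomorphic_deriv)
  then have "isCont (deriv g) 0" using hol_isCont r by simp
  then obtain d0 where d0: "d0 > 0" "\<And>w. dist w 0 < d0 \<Longrightarrow> dist (deriv g w) (deriv g 0) < \<epsilon>"
    using e unfolding continuous_at_eps_delta by blast
  define \<delta> where "\<delta> = min d0 r"
  have dp: "\<delta> > 0" "\<delta> \<le> r" using d0 r by (auto simp: \<delta>_def)
  have "norm (g x - g y - deriv g 0 * (x - y)) \<le> \<epsilon> * norm (x - y)"
    if x: "x \<in> ball 0 \<delta>" and y: "y \<in> ball 0 \<delta>" for x y
  proof -
    have "norm ((\<lambda>w. g w - deriv g 0 * w) x - (\<lambda>w. g w - deriv g 0 * w) y) \<le> \<epsilon> * norm (x - y)"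
    proof (rule field_differentiable_bound[where f' = "\<lambda>w. deriv g w - deriv g 0"])
      show "convex (ball (0::complex) \<delta>)" by simp
      show "((\<lambda>w. g w - deriv g 0 * w) has_field_derivative deriv g z - deriv g 0) (at z within ball 0 \<delta>)"
        if "z \<in> ball 0 \<delta>" for z
      proof -
        have "z \<in> ball 0 r" using that dp by auto
        then have "(g has_field_derivative deriv g z) (at z within ball 0 \<delta>)"
          using hol by (simp add: holomorphic_derivI)
        then show ?thesis by (auto intro!: derivative_eq_intros)
      qed
      show "norm (deriv g z - deriv g 0) \<le> \<epsilon>" if "z \<in> ball 0 \<delta>" for z
        using d0(2)[of z] that by (auto simp: \<delta>_def dist_norm)
    qed (use x y in auto)
    then show ?thesis by (simp add: algebra_simps)
  qed
  then show ?thesis using dp by blast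
qed

lemma diff_lim:
  fixes g u v w :: "complex \<Rightarrow> complex"
  assumes hol: "g holomorphic_on ball 0 r" and r: "r > 0"
    and u: "(u \<longlongrightarrow> 0) (at 0)" and v: "(v \<longlongrightarrow> 0) (at 0)"
    and c: "((\<lambda>z. (u z - v z) / w z) \<longlongrightarrow> c) (at 0)"
  shows "((\<lambda>z. (g (u z) - g (v z)) / w z) \<longlongrightarrow> deriv g 0 * c) (at 0)"
proof -
  define E where "E z = g (u z) - g (v z) - deriv g 0 * (u z - v z)" for z
  have E0: "((\<lambda>z. E z / w z) \<longlongrightarrow> 0) (at 0)"
  proof (rule tendstoI)
    fix e :: real assume e: "e > 0"
    define \<epsilon> where "\<epsilon> = e / (2 * (norm c + 1))"
    have ep: "\<epsilon> > 0" unfolding \<epsilon>_def using e norm_ge_zero[of c] by (intro divide_pos_pos mult_pos_pos) linarith+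
    obtain \<delta> where dl: "\<delta> > 0" and bd: "\<And>x y. x \<in> ball 0 \<delta> \<Longrightarrow> y \<in> ball 0 \<delta> \<Longrightarrow>
           norm (g x - g y - deriv g 0 * (x - y)) \<le> \<epsilon> * norm (x - y)"
      using strong_diff[OF hol r ep] by blast
    have ev1: "\<forall>\<^sub>F z in at 0. dist (u z) 0 < \<delta>" using u dl by (rule tendstoD)
    have ev2: "\<forall>\<^sub>F z in at 0. dist (v z) 0 < \<delta>" using v dl by (rule tendstoD)
    have ev3: "\<forall>\<^sub>F z in at 0. dist ((u z - v z) / w z) c < 1" using c by (rule tendstoD) simp
    show "\<forall>\<^sub>F z in at 0. dist (E z / w z) 0 < e"
      using ev1 ev2 ev3
    proof eventually_elim
      case (elim z)
      have n1: "norm ((u z - v z) / w z) < norm c + 1"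
        using elim(3) norm_triangle_ineq2[of "(u z - v z) / w z" c] by (simp add: dist_norm)
      have "norm (E z) \<le> \<epsilon> * norm (u z - v z)"
        unfolding E_def using bd elim(1,2) by (simp add: dist_norm)
      then have "norm (E z / w z) \<le> \<epsilon> * norm ((u z - v z) / w z)"
        by (simp add: norm_divide divide_right_mono)
      also have "\<dots> \<le> \<epsilon> * (norm c + 1)" using n1 ep by simp
      also have "\<dots> < e" using e by (simp add: \<epsilon>_def field_simps add_pos_nonneg)
      finally show ?case by simp
    qed
  qed
  have "((\<lambda>z. deriv g 0 * ((u z - v z) / w z) + E z / w z) \<longlongrightarrow> deriv g 0 * c + 0) (at 0)"
    by (intro tendsto_intros c E0)
  moreover have "deriv g 0 * ((u z - v z) / w z) + E z / w z = (g (u z) - g (v z)) / w z" for z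
    by (simp add: E_def field_simps diff_divide_distrib add_divide_distrib)
  ultimately show ?thesis by simp
qed


lemma nhds_at: "eventually P (nhds (a::complex)) \<Longrightarrow> eventually P (at a)"
  unfolding eventually_at_filter by (erule eventually_mono) simp

lemma factor1:
  fixes g :: "complex \<Rightarrow> complex"
  assumes hol: "g holomorphic_on ball 0 r" and r: "r > 0" and g0: "g 0 = 0"
  shows "\<exists>Q. isCont Q 0 \<and> Q 0 = deriv g 0 \<and> (\<forall>w. g w = w * Q w)"
proof -
  define Q where "Q w = (if w = 0 then deriv g 0 else g w / w)" for w
  have "(g has_field_derivative deriv g 0) (at 0)"
    using hol r by (intro holomorphic_derivI[where S = "ball 0 r"]) auto
  then have "((\<lambda>y. (g y - g 0) / (y - 0)) \<longlongrightarrow> deriv g 0) (at 0)"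
    by (simp add: has_field_derivative_iff)
  then have "(Q \<longlongrightarrow> deriv g 0) (at 0)"
    by (rule Lim_transform_eventually) (auto simp: Q_def g0 eventually_at_filter)
  then have "(Q \<longlongrightarrow> Q 0) (at 0)" by (simp add: Q_def)
  then have "isCont Q 0" by (simp add: isCont_def)
  moreover have "g w = w * Q w" for w by (auto simp: Q_def g0)
  ultimately show ?thesis by (auto simp: Q_def)
qed

lemma ratio_lim:
  fixes g :: "complex \<Rightarrow> complex"
  assumes hol: "g holomorphic_on ball 0 r" and r: "r > 0" and g0: "g 0 = 0"
  shows "((\<lambda>z. g z / z) \<longlongrightarrow> deriv g 0) (at 0)"
proof -
  have "(g has_field_derivative deriv g 0) (at 0)"
    using hol r by (intro holomorphic_derivI[where S = "ball 0 r"]) auto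
  then show ?thesis by (simp add: has_field_derivative_iff g0)
qed

lemma pow_factor:
  "\<exists>R. isCont R 0 \<and> R 0 = of_nat n \<and> (\<forall>t::complex. (1 + t) ^ n - 1 = t * R t)"
proof -
  have hol: "(\<lambda>t::complex. (1 + t) ^ n - 1) holomorphic_on ball 0 1"
    by (intro holomorphic_intros)
  have "((\<lambda>t::complex. (1 + t) ^ n - 1) has_field_derivative of_nat n * (1 + 0) ^ (n - 1)) (at 0)"
    by (auto intro!: derivative_eq_intros)
  then have "deriv (\<lambda>t::complex. (1 + t) ^ n - 1) 0 = of_nat n"
    by (simp add: DERIV_imp_deriv)
  with factor1[OF hol] show ?thesis by auto
qed

lemma alg: fixes z X A B w :: complex
  assumes "z \<noteq> 0" "w \<noteq> 0"
  shows "((z*(1+X))^n * A - z^n * B)/(z^n * w) = (1+X)^n * ((A - B)/w) + B * (((1+X)^n - 1)/w)"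
  using assms by (simp add: power_mult_distrib divide_simps) (simp add: algebra_simps)

lemma key:
  fixes F K k :: "complex \<Rightarrow> complex" and p q :: nat
  assumes hol: "F holomorphic_on ball 0 r" and r: "r > 0" and K: "isCont K 0" and q: "q \<ge> 1"
    and ev: "\<forall>\<^sub>F z in at 0. k z = z + z ^ Suc q * K z"
  shows "((\<lambda>z. ((k z) ^ Suc p * F (k z) - z ^ Suc p * F z) / z ^ (p + q + 1))
           \<longlongrightarrow> of_nat (Suc p) * F 0 * K 0) (at 0)"
proof -
  from pow_factor[of "Suc p"] obtain R :: "complex \<Rightarrow> complex" where R: "isCont R 0" "R 0 = of_nat (Suc p)"
      "\<And>t. (1 + t) ^ Suc p - 1 = t * R t"
    by blast
  have Kt: "(K \<longlongrightarrow> K 0) (at 0)" using K by (simp add: isCont_def)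
  have zq: "((\<lambda>z::complex. z ^ q) \<longlongrightarrow> 0) (at 0)"
  proof -
    have "((\<lambda>z::complex. z ^ q) \<longlongrightarrow> 0 ^ q) (at 0)" by (intro tendsto_intros)
    moreover have "q \<noteq> 0" using q by simp
    ultimately show ?thesis by (simp add: power_0_left)
  qed
  have idt: "((\<lambda>z::complex. z) \<longlongrightarrow> 0) (at 0)" by (intro tendsto_intros)
  have kt: "(k \<longlongrightarrow> 0) (at 0)"
  proof -
    have "((\<lambda>z. z + z ^ Suc q * K z) \<longlongrightarrow> 0 + 0 ^ Suc q * K 0) (at 0)"
      by (intro tendsto_intros Kt)
    then show ?thesis
      by (simp add: tendsto_cong[OF ev])
  qed
  have q1: "((\<lambda>z. 1 + z ^ q * K z) \<longlongrightarrow> 1) (at 0)"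
  proof -
    have "((\<lambda>z. 1 + z ^ q * K z) \<longlongrightarrow> 1 + 0 * K 0) (at 0)"
      by (intro tendsto_intros zq Kt)
    then show ?thesis by simp
  qed
  have dq: "((\<lambda>z. (k z - z) / z ^ q) \<longlongrightarrow> 0) (at 0)"
  proof -
    have "((\<lambda>z. z * K z) \<longlongrightarrow> 0 * K 0) (at 0)" by (intro tendsto_intros Kt)
    moreover have "\<forall>\<^sub>F z in at 0. z * K z = (k z - z) / z ^ q"
      using ev unfolding eventually_at_filter
      by (rule eventually_mono) (auto simp: power_Suc)
    ultimately show ?thesis by (simp add: Lim_transform_eventually)
  qed
  have dF: "((\<lambda>z. (F (k z) - F z) / z ^ q) \<longlongrightarrow> deriv F 0 * 0) (at 0)"
    by (rule diff_lim[OF hol r kt idt dq])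
  have Ft: "(F \<longlongrightarrow> F 0) (at 0)" using hol_isCont[OF hol r, of 0] r by (simp add: isCont_def)
  have Rt: "((\<lambda>z. R (z ^ q * K z)) \<longlongrightarrow> R 0) (at 0)"
  proof (rule isCont_tendsto_compose[OF R(1)])
    have "((\<lambda>z. z ^ q * K z) \<longlongrightarrow> 0 * K 0) (at 0)" by (intro tendsto_intros zq Kt)
    then show "((\<lambda>z. z ^ q * K z) \<longlongrightarrow> 0) (at 0)" by simp
  qed
  have "((\<lambda>z. (1 + z ^ q * K z) ^ Suc p * ((F (k z) - F z) / z ^ q) + F z * (K z * R (z ^ q * K z)))
      \<longlongrightarrow> 1 ^ Suc p * (deriv F 0 * 0) + F 0 * (K 0 * R 0)) (at 0)"
    by (intro tendsto_intros q1 dF Ft Kt Rt)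
  moreover have "\<forall>\<^sub>F z in at 0. (1 + z ^ q * K z) ^ Suc p * ((F (k z) - F z) / z ^ q) + F z * (K z * R (z ^ q * K z))
     = ((k z) ^ Suc p * F (k z) - z ^ Suc p * F z) / z ^ (p + q + 1)"
    using ev unfolding eventually_at_filter
  proof (rule eventually_mono, intro impI)
    fix z :: complex assume h: "z \<noteq> 0 \<longrightarrow> z \<in> UNIV \<longrightarrow> k z = z + z ^ Suc q * K z" and z: "z \<noteq> 0"
    define X where "X = z ^ q * K z"
    have kz: "k z = z * (1 + X)" using h z by (simp add: X_def algebra_simps)
    have zq0: "z ^ q \<noteq> 0" using z by simp
    have pw: "z ^ (p + q + 1) = z ^ Suc p * z ^ q" by (simp add: power_add[symmetric])
    have "((k z) ^ Suc p * F (k z) - z ^ Suc p * F z) / z ^ (p + q + 1)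
        = ((z * (1 + X)) ^ Suc p * F (k z) - z ^ Suc p * F z) / (z ^ Suc p * z ^ q)"
      by (simp only: pw kz)
    also have "\<dots> = (1 + X) ^ Suc p * ((F (k z) - F z) / z ^ q) + F z * (((1 + X) ^ Suc p - 1) / z ^ q)"
      by (rule alg[OF z zq0])
    also have "((1 + X) ^ Suc p - 1) / z ^ q = X * R X / z ^ q"
      by (simp only: R(3))
    also have "X * R X / z ^ q = K z * R X"
      using z by (simp add: X_def)
    finally show "(1 + z ^ q * K z) ^ Suc p * ((F (k z) - F z) / z ^ q) + F z * (K z * R (z ^ q * K z))
     = ((k z) ^ Suc p * F (k z) - z ^ Suc p * F z) / z ^ (p + q + 1)" by (simp add: X_def)
  qed
  ultimately have "((\<lambda>z. ((k z) ^ Suc p * F (k z) - z ^ Suc p * F z) / z ^ (p + q + 1))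
           \<longlongrightarrow> 1 ^ Suc p * (deriv F 0 * 0) + F 0 * (K 0 * R 0)) (at 0)"
    by (rule Lim_transform_eventually)
  then show ?thesis using R(2) by (simp add: mult_ac)
qed


lemma inG_facts:
  assumes "in_G f"
  obtains r where "r > 0" "f holomorphic_on ball 0 r" "isCont f 0" "f 0 = 0" "deriv f 0 \<noteq> 0"
  using assms hol_isCont unfolding in_G_def by force

lemma comp_ev:
  fixes a b c :: "complex \<Rightarrow> complex"
  assumes "\<forall>\<^sub>F z in nhds 0. a z = b z" and "isCont c 0" and "c 0 = (0::complex)"
  shows "\<forall>\<^sub>F z in nhds 0. a (c z) = b (c z)"
proof -
  have "filterlim c (nhds 0) (nhds 0)"
    using assms(2,3) by (metis tendsto_at_iff_tendsto_nhds isCont_def)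
  then show ?thesis using assms(1) unfolding filterlim_iff by blast
qed

lemma funpow_hol:
  assumes "in_G g"
  shows "\<exists>r>0. (g ^^ n) holomorphic_on ball 0 r \<and> (g ^^ n) 0 = 0"
proof (induction n)
  case 0
  have "(\<lambda>x::complex. x) holomorphic_on ball 0 1" by simp
  then show ?case by (auto simp: id_def intro!: exI[of _ 1])
next
  case (Suc n)
  obtain rg where rg: "rg > 0" "g holomorphic_on ball 0 rg" "g 0 = 0"
    using assms by (elim inG_facts) auto
  obtain r where r: "r > 0" "(g ^^ n) holomorphic_on ball 0 r" "(g ^^ n) 0 = 0" using Suc by blast
  have "isCont (g ^^ n) 0" using hol_isCont[OF r(2) r(1)] r(1) by simp
  then obtain d where d: "d > 0" "\<And>x. dist x 0 < d \<Longrightarrow> dist ((g ^^ n) x) ((g ^^ n) 0) < rg"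
    using rg(1) unfolding continuous_at_eps_delta by blast
  define r' where "r' = min r d"
  have "(g \<circ> (g ^^ n)) holomorphic_on ball 0 r'"
  proof (rule holomorphic_on_compose_gen[OF _ rg(2)])
    show "(g ^^ n) holomorphic_on ball 0 r'" using r(2) by (rule holomorphic_on_subset) (auto simp: r'_def)
    show "(g ^^ n) ` ball 0 r' \<subseteq> ball 0 rg" using d(2) r(3) by (auto simp: r'_def dist_commute)
  qed
  then show ?case using r d rg by (auto simp: r'_def o_def intro!: exI[of _ r'])
qed

lemma funpow_isCont:
  assumes "in_G g" shows "isCont (g ^^ n) 0" "(g ^^ n) 0 = 0"
  using funpow_hol[OF assms, of n] hol_isCont by auto

lemma funpow_ratio:
  assumes "in_G g"
  shows "((\<lambda>z. (g ^^ n) z / z) \<longlongrightarrow> deriv g 0 ^ n) (at 0)"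
proof -
  obtain rg where rg: "rg > 0" "g holomorphic_on ball 0 rg" "g 0 = 0"
    using assms by (elim inG_facts) auto
  obtain Q where Q: "isCont Q 0" "Q 0 = deriv g 0" "\<And>w. g w = w * Q w"
    using factor1[OF rg(2) rg(1) rg(3)] by blast
  have "((\<lambda>z. (g ^^ n) z / z) \<longlongrightarrow> deriv g 0 ^ n) (at 0) \<and> ((g ^^ n) \<longlongrightarrow> 0) (at 0)"
  proof (induction n)
    case 0
    have "((\<lambda>z::complex. 1) \<longlongrightarrow> 1) (at 0)" by simp
    moreover have "\<forall>\<^sub>F z in at (0::complex). 1 = z / z" by (simp add: eventually_at_filter)
    ultimately have "((\<lambda>z::complex. z / z) \<longlongrightarrow> 1) (at 0)" by (rule Lim_transform_eventually)
    moreover have "((\<lambda>z::complex. z) \<longlongrightarrow> 0) (at 0)" by (intro tendsto_intros)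
    ultimately show ?case by (simp add: id_def)
  next
    case (Suc n)
    have QQ: "((\<lambda>z. Q ((g ^^ n) z)) \<longlongrightarrow> Q 0) (at 0)"
      using isCont_tendsto_compose[OF Q(1)] Suc by blast
    have "((\<lambda>z. (g ^^ n) z / z * Q ((g ^^ n) z)) \<longlongrightarrow> deriv g 0 ^ n * Q 0) (at 0)"
      by (intro tendsto_intros QQ) (use Suc in blast)
    moreover have "(g ^^ Suc n) z / z = (g ^^ n) z / z * Q ((g ^^ n) z)" for z
      by (simp add: Q(3))
    moreover have "(((\<lambda>z. (g ^^ n) z * Q ((g ^^ n) z))) \<longlongrightarrow> 0 * Q 0) (at 0)"
      by (intro tendsto_intros QQ) (use Suc in blast)
    moreover have "(g ^^ Suc n) z = (g ^^ n) z * Q ((g ^^ n) z)" for z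
      by (simp add: Q(3))
    ultimately show ?case using Q(2) by (simp add: mult_ac)
  qed
  then show ?thesis by blast
qed


lemma Ap_expand:
  assumes p: "1 \<le> p" and A: "in_Ap p f"
  shows "\<exists>F r. r > 0 \<and> F holomorphic_on ball 0 r \<and> (\<forall>w\<in>ball 0 r. f w = w + w ^ Suc p * F w) \<and> F 0 \<noteq> 0"
proof -
  have Gp: "in_Gp p f" and nG: "\<not> in_Gp (Suc p) f" using A by (auto simp: in_Ap_def)
  have G: "in_G f" and d1: "deriv f 0 = 1" and dk: "\<And>k. 2 \<le> k \<Longrightarrow> k \<le> p \<Longrightarrow> (deriv ^^ k) f 0 = 0"
    using Gp by (auto simp: in_Gp_def)
  obtain r where r: "r > 0" "f holomorphic_on ball 0 r" "f 0 = 0"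
    using G by (elim inG_facts) auto
  have dp: "(deriv ^^ Suc p) f 0 \<noteq> 0"
  proof
    assume "(deriv ^^ Suc p) f 0 = 0"
    then have "\<forall>k. 2 \<le> k \<and> k \<le> Suc p \<longrightarrow> (deriv ^^ k) f 0 = 0"
      using dk le_Suc_eq by blast
    then show False using nG G d1 by (auto simp: in_Gp_def)
  qed
  define \<phi> where "\<phi> w = f w - w" for w
  have holphi: "\<phi> holomorphic_on ball 0 r" unfolding \<phi>_def using r by (intro holomorphic_intros)
  have hd: "(deriv ^^ i) \<phi> 0 = (deriv ^^ i) f 0 - (if i = 0 then 0 else if i = 1 then 1 else 0)" for i
  proof -
    have "(deriv ^^ i) \<phi> 0 = (deriv ^^ i) f 0 - (deriv ^^ i) (\<lambda>w. w) 0"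
      unfolding \<phi>_def by (rule higher_deriv_diff) (use r in auto)
    then show ?thesis by simp
  qed
  obtain F r' where F: "0 < r'" "F holomorphic_on ball 0 r'"
      "\<And>w. w \<in> ball 0 r' \<Longrightarrow> \<phi> w - \<phi> 0 = (w - 0) ^ Suc p * F w"
      "\<And>w. w \<in> ball 0 r' \<Longrightarrow> F w \<noteq> 0"
  proof (rule holomorphic_factor_order_of_zero[OF holphi open_ball, of 0 "Suc p"])
    show "0 \<in> ball (0::complex) r" using r by simp
    show "0 < Suc p" by simp
    show "(deriv ^^ Suc p) \<phi> 0 \<noteq> 0" using dp p hd[of "Suc p"] by (simp del: funpow.simps)
    show "(deriv ^^ i) \<phi> 0 = 0" if "0 < i" "i < Suc p" for i
    proof (cases "i = 1")
      case True then show ?thesis using d1 hd[of 1] by simp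
    next
      case False then show ?thesis using that dk[of i] by (simp add: hd)
    qed
  qed blast
  have "\<forall>w\<in>ball 0 r'. f w = w + w ^ Suc p * F w"
    using F(3) r(3) by (auto simp: \<phi>_def algebra_simps)
  moreover have "F 0 \<noteq> 0" using F(1,4) by simp
  ultimately show ?thesis using F(1,2) by blast
qed


lemma G1_expand:
  fixes h :: "complex \<Rightarrow> complex"
  assumes hol: "h holomorphic_on ball 0 r" and r: "r > 0" and h0: "h 0 = 0"
    and lim: "((\<lambda>z. h z / z) \<longlongrightarrow> 1) (at 0)" and nid: "\<not> germ_eq h id"
  shows "\<exists>H q r'. q \<ge> 1 \<and> r' > 0 \<and> H holomorphic_on ball 0 r' \<and>
           (\<forall>w\<in>ball 0 r'. h w = w + w ^ Suc q * H w) \<and> H 0 \<noteq> 0"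
proof -
  define \<phi> where "\<phi> w = h w - w" for w
  have holphi: "\<phi> holomorphic_on ball 0 r" unfolding \<phi>_def using hol by (intro holomorphic_intros)
  have "\<exists>n. (deriv ^^ n) \<phi> 0 \<noteq> 0"
  proof (rule ccontr)
    assume "\<not> ?thesis"
    then have "\<phi> w = 0" if "w \<in> ball 0 r" for w
      using holomorphic_fun_eq_0_on_ball[OF holphi that] by auto
    then have "\<forall>\<^sub>F w in nhds 0. h w = id w"
      using eventually_nhds_in_open[of "ball 0 r" 0] r
      by (auto simp: \<phi>_def elim!: eventually_mono)
    then show False using nid by (simp add: germ_eq_def)
  qed
  define m where "m = (LEAST n. (deriv ^^ n) \<phi> 0 \<noteq> 0)"
  have m: "(deriv ^^ m) \<phi> 0 \<noteq> 0" unfolding m_def using \<open>\<exists>n. _\<close> by (rule LeastI_ex)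
  have mlt: "(deriv ^^ i) \<phi> 0 = 0" if "i < m" for i
    using not_less_Least[of i "\<lambda>n. (deriv ^^ n) \<phi> 0 \<noteq> 0"] that by (auto simp: m_def)
  have m0: "m \<noteq> 0" proof assume "m = 0" then show False using m h0 by (simp add: \<phi>_def) qed
  obtain H r' where H: "0 < r'" "H holomorphic_on ball 0 r'"
      "\<And>w. w \<in> ball 0 r' \<Longrightarrow> \<phi> w - \<phi> 0 = (w - 0) ^ m * H w"
      "\<And>w. w \<in> ball 0 r' \<Longrightarrow> H w \<noteq> 0"
    by (rule holomorphic_factor_order_of_zero[OF holphi open_ball, of 0 m]) (use r m m0 mlt in auto)
  have hw: "h w = w + w ^ m * H w" if "w \<in> ball 0 r'" for w
    using H(3)[OF that] h0 by (auto simp: \<phi>_def algebra_simps)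
  have "m \<noteq> 1"
  proof
    assume m1: "m = 1"
    have "isCont H 0" using hol_isCont[OF H(2) H(1)] H(1) by simp
    then have "((\<lambda>z. 1 + H z) \<longlongrightarrow> 1 + H 0) (at 0)" by (intro tendsto_intros) (simp add: isCont_def)
    moreover have "\<forall>\<^sub>F z in at 0. 1 + H z = h z / z"
      using eventually_nhds_in_open[of "ball 0 r'" 0] H(1) unfolding eventually_at_filter
      by (auto elim!: eventually_mono simp: hw m1 field_simps)
    ultimately have "((\<lambda>z. h z / z) \<longlongrightarrow> 1 + H 0) (at 0)" by (rule Lim_transform_eventually)
    then have "1 + H 0 = 1" using lim by (rule LIM_unique)
    then show False using H(4)[of 0] H(1) by simp
  qed
  then obtain q where q: "m = Suc q" "q \<ge> 1" using m0 by (cases m) auto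
  have "\<forall>w\<in>ball 0 r'. h w = w + w ^ Suc q * H w" using hw q(1) by simp
  moreover have "H 0 \<noteq> 0" using H(1,4) by simp
  ultimately show ?thesis using q(2) H(1,2) by blast
qed


lemma tend_ball: "(u \<longlongrightarrow> (0::complex)) F \<Longrightarrow> r > 0 \<Longrightarrow> eventually (\<lambda>z. u z \<in> ball 0 r) F"
  by (drule tendstoD[of u 0 F r]) (auto simp: dist_norm elim!: eventually_mono)

lemma cont_tend: "isCont c 0 \<Longrightarrow> c 0 = (0::complex) \<Longrightarrow> (c \<longlongrightarrow> 0) (at (0::complex))"
  by (simp add: isCont_def)

lemma conj_lim:
  fixes g u F :: "complex \<Rightarrow> complex"
  assumes hol: "g holomorphic_on ball 0 rg" and rg: "rg > 0" and g0: "g 0 = 0"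
    and F: "isCont F 0"
    and ev: "\<forall>\<^sub>F z in at 0. g (u z) - g z = (g z) ^ Suc n * F (g z)"
    and u: "(u \<longlongrightarrow> 0) (at 0)" and c: "((\<lambda>z. (u z - z) / z ^ Suc n) \<longlongrightarrow> c) (at 0)"
  shows "deriv g 0 * c = deriv g 0 ^ Suc n * F 0"
proof -
  have idt: "((\<lambda>z::complex. z) \<longlongrightarrow> 0) (at 0)" by (intro tendsto_intros)
  have L1: "((\<lambda>z. (g (u z) - g z) / z ^ Suc n) \<longlongrightarrow> deriv g 0 * c) (at 0)"
    using diff_lim[OF hol rg u idt c] by simp
  have gt: "(g \<longlongrightarrow> 0) (at 0)" using cont_tend[OF hol_isCont[OF hol rg] g0] rg by simp
  have "((\<lambda>z. (g z / z) ^ Suc n * F (g z)) \<longlongrightarrow> deriv g 0 ^ Suc n * F 0) (at 0)"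
    by (intro tendsto_intros ratio_lim[OF hol rg g0] isCont_tendsto_compose[OF F gt])
  moreover have "\<forall>\<^sub>F z in at 0. (g z / z) ^ Suc n * F (g z) = (g (u z) - g z) / z ^ Suc n"
    using ev unfolding eventually_at_filter
    by (rule eventually_mono) (auto simp: power_divide)
  ultimately have L2: "((\<lambda>z. (g (u z) - g z) / z ^ Suc n) \<longlongrightarrow> deriv g 0 ^ Suc n * F 0) (at 0)"
    by (rule Lim_transform_eventually)
  show ?thesis using L1 L2 by (rule LIM_unique)
qed

lemma inv_lim:
  fixes f finv F :: "complex \<Rightarrow> complex"
  assumes hol: "f holomorphic_on ball 0 r" and r: "r > 0" and f0: "f 0 = 0" and d1: "deriv f 0 = 1"
    and rF: "rF > 0" and fe: "\<forall>w\<in>ball 0 rF. f w = w + w ^ Suc p * F w" and F: "isCont F 0"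
    and ci: "isCont finv 0" "finv 0 = 0" and ev: "\<forall>\<^sub>F z in nhds 0. f (finv z) = z"
  shows "((\<lambda>z. (finv z - z) / z ^ Suc p) \<longlongrightarrow> - F 0) (at 0)"
proof -
  obtain Q where Q: "isCont Q 0" "Q 0 = 1" "\<And>w. f w = w * Q w"
    using factor1[OF hol r f0] d1 by auto
  have ft: "(finv \<longlongrightarrow> 0) (at 0)" using cont_tend[OF ci] .
  have QT: "((\<lambda>z. Q (finv z)) \<longlongrightarrow> 1) (at 0)" using isCont_tendsto_compose[OF Q(1) ft] Q(2) by simp
  have evat: "\<forall>\<^sub>F z in at 0. f (finv z) = z \<and> z \<noteq> 0 \<and> finv z \<in> ball 0 rF"
    using nhds_at[OF ev] tend_ball[OF ft rF] eventually_at[of "\<lambda>z. z \<noteq> 0"]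
    by (auto simp: eventually_at_filter elim: eventually_elim2)
  have "((\<lambda>z. 1 / Q (finv z)) \<longlongrightarrow> 1 / 1) (at 0)" by (intro tendsto_intros QT) simp
  moreover have "\<forall>\<^sub>F z in at 0. 1 / Q (finv z) = finv z / z"
    using evat
  proof (rule eventually_mono)
    fix z assume "f (finv z) = z \<and> z \<noteq> 0 \<and> finv z \<in> ball 0 rF"
    then have "z = finv z * Q (finv z)" "z \<noteq> 0" using Q(3) by metis+
    moreover from this have "Q (finv z) \<noteq> 0" by auto
    ultimately show "1 / Q (finv z) = finv z / z" by (simp add: field_simps)
  qed
  ultimately have rt: "((\<lambda>z. finv z / z) \<longlongrightarrow> 1) (at 0)" by (auto intro: Lim_transform_eventually[of _ 1])
  have FT: "((\<lambda>z. F (finv z)) \<longlongrightarrow> F 0) (at 0)" using isCont_tendsto_compose[OF F ft] .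
  have "((\<lambda>z. - ((finv z / z) ^ Suc p * F (finv z))) \<longlongrightarrow> - (1 ^ Suc p * F 0)) (at 0)"
    by (intro tendsto_intros rt FT)
  moreover have "\<forall>\<^sub>F z in at 0. - ((finv z / z) ^ Suc p * F (finv z)) = (finv z - z) / z ^ Suc p"
    using evat
  proof (rule eventually_mono)
    fix z assume a: "f (finv z) = z \<and> z \<noteq> 0 \<and> finv z \<in> ball 0 rF"
    then have "z = finv z + finv z ^ Suc p * F (finv z)" using fe by metis
    then have "finv z - z = - (finv z ^ Suc p * F (finv z))" by (simp add: algebra_simps)
    then show "- ((finv z / z) ^ Suc p * F (finv z)) = (finv z - z) / z ^ Suc p"
      using a by (simp add: power_divide)
  qed
  ultimately show ?thesis by (simp add: Lim_transform_eventually)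
qed


lemma comm_pq:
  fixes f h F H :: "complex \<Rightarrow> complex"
  assumes p: "p \<ge> 1" and q: "q \<ge> 1"
    and rF: "rF > 0" "F holomorphic_on ball 0 rF" "\<forall>w\<in>ball 0 rF. f w = w + w ^ Suc p * F w" "F 0 \<noteq> 0"
    and rH: "rH > 0" "H holomorphic_on ball 0 rH" "\<forall>w\<in>ball 0 rH. h w = w + w ^ Suc q * H w" "H 0 \<noteq> 0"
    and cf: "isCont f 0" "f 0 = 0" and ch: "isCont h 0" "h 0 = 0"
    and ev: "\<forall>\<^sub>F z in nhds 0. h (f z) = f (h z)"
  shows "p = q"
proof -
  have ft: "(f \<longlongrightarrow> 0) (at 0)" and ht: "(h \<longlongrightarrow> 0) (at 0)" using cont_tend cf ch by auto
  have idt: "((\<lambda>z::complex. z) \<longlongrightarrow> 0) (at 0)" by (intro tendsto_intros)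
  have bF: "\<forall>\<^sub>F z::complex in at 0. z \<in> ball 0 rF" using tend_ball[OF idt rF(1)] .
  have bH: "\<forall>\<^sub>F z::complex in at 0. z \<in> ball 0 rH" using tend_ball[OF idt rH(1)] .
  have evf: "\<forall>\<^sub>F z in at 0. f z = z + z ^ Suc p * F z" using bF rF(3) by (auto elim: eventually_mono)
  have evh: "\<forall>\<^sub>F z in at 0. h z = z + z ^ Suc q * H z" using bH rH(3) by (auto elim: eventually_mono)
  have cF: "isCont F 0" and cH: "isCont H 0" using hol_isCont rF rH by auto
  have k1: "((\<lambda>z. ((f z) ^ Suc q * H (f z) - z ^ Suc q * H z) / z ^ (q + p + 1))
           \<longlongrightarrow> of_nat (Suc q) * H 0 * F 0) (at 0)"
    by (rule key[OF rH(2) rH(1) cF p evf])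
  have k2: "((\<lambda>z. ((h z) ^ Suc p * F (h z) - z ^ Suc p * F z) / z ^ (p + q + 1))
           \<longlongrightarrow> of_nat (Suc p) * F 0 * H 0) (at 0)"
    by (rule key[OF rF(2) rF(1) cH q evh])
  have "\<forall>\<^sub>F z in at 0. ((f z) ^ Suc q * H (f z) - z ^ Suc q * H z) / z ^ (q + p + 1)
      = ((h z) ^ Suc p * F (h z) - z ^ Suc p * F z) / z ^ (p + q + 1)"
    using nhds_at[OF ev] bF bH tend_ball[OF ft rH(1)] tend_ball[OF ht rF(1)]
  proof eventually_elim
    case (elim z)
    have "h (f z) = f z + (f z) ^ Suc q * H (f z)" using rH(3) elim(4) by blast
    moreover have "f (h z) = h z + (h z) ^ Suc p * F (h z)" using rF(3) elim(5) by blast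
    moreover have "f z = z + z ^ Suc p * F z" using rF(3) elim(2) by blast
    moreover have "h z = z + z ^ Suc q * H z" using rH(3) elim(3) by blast
    ultimately have "(f z) ^ Suc q * H (f z) - z ^ Suc q * H z = (h z) ^ Suc p * F (h z) - z ^ Suc p * F z"
      using elim(1) by (simp add: algebra_simps)
    then show ?case by (simp add: add.commute)
  qed
  then have "((\<lambda>z. ((h z) ^ Suc p * F (h z) - z ^ Suc p * F z) / z ^ (p + q + 1))
           \<longlongrightarrow> of_nat (Suc q) * H 0 * F 0) (at 0)"
    using k1 by (rule Lim_transform_eventually[rotated])
  then have "of_nat (Suc q) * H 0 * F 0 = (of_nat (Suc p) * F 0 * H 0 :: complex)"
    using k2 by (rule LIM_unique)
  then have "(of_nat (Suc q) :: complex) = of_nat (Suc p)" using rF(4) rH(4) by (simp add: mult_ac)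
  then show ?thesis by (simp only: of_nat_eq_iff)
qed

lemma nt:
  fixes l :: complex
  assumes p: "p \<ge> 1" and lp: "l ^ p = -1"
  shows "\<exists>s\<ge>1. (\<forall>m. 1 \<le> m \<and> m < 2 * s \<longrightarrow> l ^ m \<noteq> 1) \<and> l ^ (2 * s) = 1 \<and> (\<exists>k. odd k \<and> p = k * s)"
proof -
  have "l ^ (2 * p) = (l ^ p) ^ 2" by (simp add: power_mult[symmetric] mult.commute)
  then have l2p: "l ^ (2 * p) = 1" using lp by simp
  define d where "d = (LEAST n. 0 < n \<and> l ^ n = 1)"
  have ex: "\<exists>n. 0 < n \<and> l ^ n = 1" using l2p p by (intro exI[of _ "2 * p"]) auto
  have d: "0 < d" "l ^ d = 1" using LeastI_ex[OF ex] by (auto simp: d_def)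
  have dmin: "\<not> (0 < m \<and> l ^ m = 1)" if "m < d" for m
    using not_less_Least[of m "\<lambda>n. 0 < n \<and> l ^ n = 1"] that by (auto simp: d_def)
  have dvd: "d dvd n" if "l ^ n = 1" for n
  proof -
    define q where "q = n div d"
    define r where "r = n mod d"
    have e: "n = d * q + r" by (simp add: q_def r_def)
    have "l ^ n = (l ^ d) ^ q * l ^ r" unfolding e by (simp only: power_add power_mult)
    then have "l ^ r = 1" using that d by simp
    then have "l ^ (n mod d) = 1" by (simp add: r_def)
    moreover have "n mod d < d" using d by simp
    ultimately have "n mod d = 0" using dmin[of "n mod d"] by auto
    then show ?thesis by (simp add: mod_eq_0_iff_dvd)
  qed
  have ndp: "\<not> d dvd p"
  proof
    assume "d dvd p" then obtain j where "p = d * j" by blast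
    then have "l ^ p = 1" using d by (simp add: power_mult)
    then show False using lp by simp
  qed
  have "d dvd 2 * p" using dvd l2p by blast
  have "even d"
  proof (rule ccontr)
    assume "odd d"
    then have "coprime d 2" by (simp add: coprime_commute)
    then have "d dvd p" using \<open>d dvd 2 * p\<close> coprime_dvd_mult_right_iff by blast
    then show False using ndp by blast
  qed
  then obtain s where s: "d = 2 * s" by blast
  have s1: "s \<ge> 1" using d s by simp
  have "s dvd p" using \<open>d dvd 2 * p\<close> s by simp
  then obtain k where k: "p = s * k" by (rule dvdE)
  then have k: "p = k * s" by (simp add: mult.commute)
  have "odd k"
  proof
    assume "even k" then obtain j where "k = 2 * j" by blast
    then have "d dvd p" using k s by simp
    then show False using ndp by blast
  qed
  moreover have "\<forall>m. 1 \<le> m \<and> m < 2 * s \<longrightarrow> l ^ m \<noteq> 1" using dmin s by auto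
  ultimately show ?thesis using s1 s d k by blast
qed


theorem theorem1p4:
  fixes p :: nat and f g :: "complex \<Rightarrow> complex"
  assumes "1 \<le> p" and "in_Ap p f" and "in_R f g"
  shows "\<exists>s\<ge>1. germ_order g (2 * s) \<and> (\<exists>k::nat. odd k \<and> p = k * s)"
proof -
  note p = assms(1)
  have fG: "in_G f" and d1: "deriv f 0 = 1" using assms(2) by (auto simp: in_Ap_def in_Gp_def)
  obtain ginv finv where gG: "in_G g" and gi: "germ_inv g ginv" and fi: "germ_inv f finv"
    and E: "germ_eq (ginv \<circ> f \<circ> g) finv"
    using assms(3) by (auto simp: in_R_def)
  obtain rf where rf: "rf > 0" "f holomorphic_on ball 0 rf" "isCont f 0" "f 0 = 0"
    using fG by (elim inG_facts) auto
  obtain rg where rg: "rg > 0" "g holomorphic_on ball 0 rg" "isCont g 0" "g 0 = 0" "deriv g 0 \<noteq> 0"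
    using gG by (elim inG_facts) auto
  have gi0: "in_G ginv" and fi0: "in_G finv" using gi fi by (auto simp: germ_inv_def)
  obtain r1 where "r1 > 0" "ginv holomorphic_on ball 0 r1" "isCont ginv 0" "ginv 0 = 0"
    using gi0 by (elim inG_facts) auto
  then have cgi: "isCont ginv 0" "ginv 0 = 0" by auto
  obtain r2 where "r2 > 0" "finv holomorphic_on ball 0 r2" "isCont finv 0" "finv 0 = 0"
    using fi0 by (elim inG_facts) auto
  then have cfi: "isCont finv 0" "finv 0 = 0" by auto
  have gi2: "\<forall>\<^sub>F z in nhds 0. g (ginv z) = z" using gi by (simp add: germ_inv_def germ_eq_def)
  have fi1: "\<forall>\<^sub>F z in nhds 0. finv (f z) = z" using fi by (simp add: germ_inv_def germ_eq_def)
  have fi2: "\<forall>\<^sub>F z in nhds 0. f (finv z) = z" using fi by (simp add: germ_inv_def germ_eq_def)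
  have E': "\<forall>\<^sub>F z in nhds 0. ginv (f (g z)) = finv z" using E by (simp add: germ_eq_def)
  have cfg: "isCont (\<lambda>z. f (g z)) 0" using isCont_o2[OF rg(3), of f] rg(4) rf(3) by simp
  have cgf: "isCont (\<lambda>z. g (f z)) 0" using isCont_o2[OF rf(3), of g] rf(4) rg(3) by simp
  have a: "\<forall>\<^sub>F z in nhds 0. f (g z) = g (finv z)"
  proof -
    have "\<forall>\<^sub>F z in nhds 0. g (ginv (f (g z))) = f (g z)"
      using comp_ev[OF gi2 cfg] rf(4) rg(4) by simp
    then show ?thesis using E' by eventually_elim auto
  qed
  have b: "\<forall>\<^sub>F z in nhds 0. g (f z) = finv (g z)"
  proof -
    have B1: "\<forall>\<^sub>F z in nhds 0. f (g (f z)) = g (finv (f z))"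
      using comp_ev[OF a rf(3,4)] .
    have B2: "\<forall>\<^sub>F z in nhds 0. f (g (f z)) = g z"
      using B1 fi1 by eventually_elim auto
    have B4: "\<forall>\<^sub>F z in nhds 0. finv (f (g (f z))) = g (f z)"
      using comp_ev[OF fi1 cgf] rf(4) rg(4) by simp
    show ?thesis using B2 B4 by eventually_elim auto
  qed
  have c: "\<forall>\<^sub>F z in nhds 0. f (g (g z)) = g (g (f z))"
  proof -
    have "\<forall>\<^sub>F z in nhds 0. f (g (g z)) = g (finv (g z))"
      using comp_ev[OF a rg(3,4)] .
    then show ?thesis using b by eventually_elim auto
  qed
  have d: "\<forall>\<^sub>F z in nhds 0. f ((g ^^ (2 * n)) z) = (g ^^ (2 * n)) (f z)" for n
  proof (induction n)
    case 0 then show ?case by simp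
  next
    case (Suc n)
    have "\<forall>\<^sub>F z in nhds 0. f (g (g ((g ^^ (2 * n)) z))) = g (g (f ((g ^^ (2 * n)) z)))"
      using comp_ev[OF c funpow_isCont[OF gG]] .
    then have "\<forall>\<^sub>F z in nhds 0. f (g (g ((g ^^ (2 * n)) z))) = g (g ((g ^^ (2 * n)) (f z)))"
      using Suc by eventually_elim auto
    then show ?case by simp
  qed
  obtain F rF where F: "rF > 0" "F holomorphic_on ball 0 rF" "\<forall>w\<in>ball 0 rF. f w = w + w ^ Suc p * F w" "F 0 \<noteq> 0"
    using Ap_expand[OF assms(1,2)] by blast
  have cF: "isCont F 0" using hol_isCont[OF F(2) F(1)] F(1) by simp
  define l where "l = deriv g 0"
  have l0: "l \<noteq> 0" using rg(5) by (simp add: l_def)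
  have gt: "(g \<longlongrightarrow> 0) (at 0)" using cont_tend rg(3,4) by blast
  have lp: "l ^ p = -1"
  proof -
    have ev: "\<forall>\<^sub>F z in at 0. g (finv z) - g z = (g z) ^ Suc p * F (g z)"
      using nhds_at[OF a] tend_ball[OF gt F(1)]
    proof eventually_elim
      case (elim z)
      then show ?case using F(3) by (metis add_diff_cancel_left')
    qed
    have "l * (- F 0) = l ^ Suc p * F 0"
      unfolding l_def
      by (rule conj_lim[OF rg(2) rg(1) rg(4) cF ev cont_tend[OF cfi]
            inv_lim[OF rf(2) rf(1) rf(4) d1 F(1) F(3) cF cfi fi2]])
    moreover have "l * F 0 * (l ^ p + 1) = l ^ Suc p * F 0 - l * (- F 0)" by (simp add: algebra_simps)
    ultimately have "l * F 0 * (l ^ p + 1) = 0" by simp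
    then show ?thesis using l0 F(4) by (simp add: add_eq_0_iff2)
  qed
  obtain s where s1: "s \<ge> 1" and smin: "\<forall>m. 1 \<le> m \<and> m < 2 * s \<longrightarrow> l ^ m \<noteq> 1"
    and s2: "l ^ (2 * s) = 1" and k: "\<exists>k. odd k \<and> p = k * s"
    using nt[OF p lp] by blast
  define h where "h = g ^^ (2 * s)"
  have hid: "germ_eq h id"
  proof (rule ccontr)
    assume nid: "\<not> germ_eq h id"
    obtain rh where rh: "rh > 0" "h holomorphic_on ball 0 rh" "h 0 = 0"
      using funpow_hol[OF gG, of "2 * s"] by (auto simp: h_def)
    have ch: "isCont h 0" using funpow_isCont[OF gG] by (simp add: h_def)
    have hlim: "((\<lambda>z. h z / z) \<longlongrightarrow> 1) (at 0)"
      using funpow_ratio[OF gG, of "2 * s"] s2 by (simp add: h_def l_def)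
    obtain H q rH where q: "q \<ge> 1" and H: "rH > 0" "H holomorphic_on ball 0 rH"
        "\<forall>w\<in>ball 0 rH. h w = w + w ^ Suc q * H w" "H 0 \<noteq> 0"
      using G1_expand[OF rh(2) rh(1) rh(3) hlim nid] by blast
    have cH: "isCont H 0" using hol_isCont[OF H(2) H(1)] H(1) by simp
    have ht: "(h \<longlongrightarrow> 0) (at 0)" using cont_tend[OF ch rh(3)] .
    have lq: "l ^ q = 1"
    proof -
      have ev: "\<forall>\<^sub>F z in at 0. g (h z) - g z = (g z) ^ Suc q * H (g z)"
        using tend_ball[OF gt H(1)]
      proof (rule eventually_mono)
        fix z assume "g z \<in> ball 0 rH"
        then have "h (g z) = g z + (g z) ^ Suc q * H (g z)" using H(3) by blast
        moreover have "g (h z) = h (g z)" unfolding h_def by (rule funpow_swap1)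
        ultimately show "g (h z) - g z = (g z) ^ Suc q * H (g z)" by simp
      qed
      have idt: "((\<lambda>z::complex. z) \<longlongrightarrow> 0) (at 0)" by (intro tendsto_intros)
      have "((\<lambda>z. (h z - z) / z ^ Suc q) \<longlongrightarrow> H 0) (at 0)"
      proof -
        have "(H \<longlongrightarrow> H 0) (at 0)" using cH by (simp add: isCont_def)
        moreover have "\<forall>\<^sub>F z in at 0. H z = (h z - z) / z ^ Suc q"
          using tend_ball[OF idt H(1)] unfolding eventually_at_filter
          by (rule eventually_mono) (use H(3) in auto)
        ultimately show ?thesis by (rule Lim_transform_eventually)
      qed
      then have "l * H 0 = l ^ Suc q * H 0"
        unfolding l_def by (rule conj_lim[OF rg(2) rg(1) rg(4) cH ev ht])
      moreover have "l * H 0 * (l ^ q - 1) = l ^ Suc q * H 0 - l * H 0" by (simp add: algebra_simps)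
      ultimately have "l * H 0 * (l ^ q - 1) = 0" by simp
      then show ?thesis using l0 H(4) by simp
    qed
    have "p = q"
    proof (rule comm_pq[OF p q F(1-4) H(1-4) rf(3,4) ch rh(3)])
      show "\<forall>\<^sub>F z in nhds 0. h (f z) = f (h z)"
        using d[of s] by (auto simp: h_def elim: eventually_mono)
    qed
    then show False using lp lq by simp
  qed
  have "germ_order g (2 * s)"
    unfolding germ_order_def
  proof (intro conjI allI impI)
    show "1 \<le> 2 * s" using s1 by simp
    show "germ_eq (g ^^ (2 * s)) id" using hid by (simp add: h_def)
    fix m assume m: "1 \<le> m \<and> m < 2 * s"
    show "\<not> germ_eq (g ^^ m) id"
    proof
      assume "germ_eq (g ^^ m) id"
      then have "\<forall>\<^sub>F z in at 0. 1 = (g ^^ m) z / z"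
        unfolding germ_eq_def eventually_at_filter by (auto elim: eventually_mono)
      then have "((\<lambda>z. (g ^^ m) z / z) \<longlongrightarrow> 1) (at 0)"
        by (rule Lim_transform_eventually[OF tendsto_const])
      then have "l ^ m = 1" using funpow_ratio[OF gG, of m] unfolding l_def by (rule LIM_unique[rotated])
      then show False using smin m by blast
    qed
  qed
  then show ?thesis using s1 k by blast
qed

end
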